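(* For every very-WSTS $\mathcal{S}$, the system $\mathcal{S}_\bot$ is a very-WSTS. Moreover, if $\mathcal{S}$ is positive, then $\mathcal{S}_\bot$ is positive.
   Context: A (labeled, ordered) transition system is $\mathcal{S}=(X,\xrightarrow{\Sigma},\le)$: $X$ a set, $\Sigma$ a finite alphabet, $\xrightarrow{a}\subseteq X\times X$, $\le$ a quasi-ordering; relations extend to words. $\mathrm{Post}(x,w)=\{y:x\xrightarrow{w}y\}$, extended to sets by union; $\downarrow D=\{x:\exists y\in D,\,x\le y\}$. WSTS: $\le$ a wqo and $x\xrightarrow{a}y$, $x'\ge x$ imply $x'\xrightarrow{w}y'\ge y$ for some $w$. Strong monotonicity: $x\xrightarrow{a}y$, $x'\ge x$ imply $x'\xrightarrow{a}y'$ with $y'\ge y$; strong-strict: additionally $x'>x$ gives $y'>y$. Deterministic: at most one $a$-successor. Ideals: nonempty downward-closed directed subsets, set $\mathrm{Idl}(X)$. Completion $\widehat{\mathcal{S}}=(\mathrm{Idl}(X),\Rightarrow_\Sigma,\subseteq)$ with $I\xRightarrow{a}J$ iff $J$ is a $\subseteq$-maximal ideal included in $\downarrow\mathrm{Post}(I,a)$. Levels: $\mathrm{Idl}_0(X)=\mathrm{Idl}(X)$, $\mathrm{Idl}_n(X)$ = unions of strictly increasing sequences in $\mathrm{Idl}_{n-1}(X)$; finitely many levels if some $\mathrm{Idl}_n(X)=\emptyset$. Very-WSTS: WSTS with strong monotonicity whose completion is a deterministic WSTS ($\subseteq$ a wqo on ideals, monotone) with strong-strict monotonicity, and $\mathrm{Idl}(X)$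 has finitely many levels. Positivity: $w$ is positive for $x$ if $x\xrightarrow{w}z$ for some $z\ge x$; $w$ is positive if positive for every $x$ with $\mathrm{Post}(x,w)\ne\emptyset$; a system is positive if every word positive for some state is positive. $\mathcal{S}_\bot=(X\cup\{\bot\},\xrightarrow{\Sigma},\le_\bot)$, where $\bot\notin X$ is a new state with no transitions (transition relations unchanged) and $\le_\bot=\le\cup\{(\bot,y):y\in X\cup\{\bot\}\}$. *)

theory Defs
  imports Main
begin

definition qo_on :: "'a set \<Rightarrow> ('a \<Rightarrow> 'a \<Rightarrow> bool) \<Rightarrow> bool" where
  "qo_on X le \<longleftrightarrow> (\<forall>x\<in>X. le x x) \<and>
     (\<forall>x\<in>X. \<forall>y\<in>X. \<forall>z\<in>X. le x y \<longrightarrow> le y z \<longrightarrow> le x z)"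

definition wqo_on :: "'a set \<Rightarrow> ('a \<Rightarrow> 'a \<Rightarrow> bool) \<Rightarrow> bool" where
  "wqo_on X le \<longleftrightarrow> qo_on X le \<and>
     (\<forall>f::nat \<Rightarrow> 'a. (\<forall>i. f i \<in> X) \<longrightarrow> (\<exists>i j. i < j \<and> le (f i) (f j)))"

definition lt_of :: "('a \<Rightarrow> 'a \<Rightarrow> bool) \<Rightarrow> 'a \<Rightarrow> 'a \<Rightarrow> bool" where
  "lt_of le x y \<longleftrightarrow> le x y \<and> \<not> le y x"

definition ts :: "'a set \<Rightarrow> 'l set \<Rightarrow> ('l \<Rightarrow> 'a \<Rightarrow> 'a \<Rightarrow> bool) \<Rightarrow> ('a \<Rightarrow> 'a \<Rightarrow> bool) \<Rightarrow> bool" where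
  "ts X Sig T le \<longleftrightarrow> finite Sig \<and> qo_on X le \<and>
     (\<forall>a x y. T a x y \<longrightarrow> x \<in> X \<and> y \<in> X)"

fun steps :: "('l \<Rightarrow> 'a \<Rightarrow> 'a \<Rightarrow> bool) \<Rightarrow> 'l list \<Rightarrow> 'a \<Rightarrow> 'a \<Rightarrow> bool" where
  "steps T [] x y \<longleftrightarrow> x = y"
| "steps T (a # w) x y \<longleftrightarrow> (\<exists>z. T a x z \<and> steps T w z y)"

definition Post :: "('l \<Rightarrow> 'a \<Rightarrow> 'a \<Rightarrow> bool) \<Rightarrow> 'a \<Rightarrow> 'l list \<Rightarrow> 'a set" where
  "Post T x w = {y. steps T w x y}"

definition PostS :: "('l \<Rightarrow> 'a \<Rightarrow> 'a \<Rightarrow> bool) \<Rightarrow> 'a set \<Rightarrow> 'l list \<Rightarrow> 'a set" where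
  "PostS T A w = (\<Union>x\<in>A. Post T x w)"

definition down :: "'a set \<Rightarrow> ('a \<Rightarrow> 'a \<Rightarrow> bool) \<Rightarrow> 'a set \<Rightarrow> 'a set" where
  "down X le D = {x \<in> X. \<exists>y\<in>D. le x y}"

definition is_ideal :: "'a set \<Rightarrow> ('a \<Rightarrow> 'a \<Rightarrow> bool) \<Rightarrow> 'a set \<Rightarrow> bool" where
  "is_ideal X le I \<longleftrightarrow> I \<noteq> {} \<and> I \<subseteq> X \<and>
     (\<forall>x\<in>X. \<forall>y\<in>I. le x y \<longrightarrow> x \<in> I) \<and>
     (\<forall>x\<in>I. \<forall>y\<in>I. \<exists>z\<in>I. le x z \<and> le y z)"

definition Idl :: "'a set \<Rightarrow> ('a \<Rightarrow> 'a \<Rightarrow> bool) \<Rightarrow> 'a set set" where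
  "Idl X le = {I. is_ideal X le I}"

definition compl_trans :: "'a set \<Rightarrow> ('a \<Rightarrow> 'a \<Rightarrow> bool) \<Rightarrow> ('l \<Rightarrow> 'a \<Rightarrow> 'a \<Rightarrow> bool)
    \<Rightarrow> 'l \<Rightarrow> 'a set \<Rightarrow> 'a set \<Rightarrow> bool" where
  "compl_trans X le T a I J \<longleftrightarrow> I \<in> Idl X le \<and> J \<in> Idl X le \<and>
     J \<subseteq> down X le (PostS T I [a]) \<and>
     (\<forall>J'\<in>Idl X le. J \<subseteq> J' \<and> J' \<subseteq> down X le (PostS T I [a]) \<longrightarrow> J' = J)"

fun Idl_level :: "'a set \<Rightarrow> ('a \<Rightarrow> 'a \<Rightarrow> bool) \<Rightarrow> nat \<Rightarrow> 'a set set" where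
  "Idl_level X le 0 = Idl X le"
| "Idl_level X le (Suc n) = {\<Union>(range f) | f. (\<forall>i. f i \<in> Idl_level X le n) \<and> (\<forall>i. f i \<subset> f (Suc i))}"

definition finitely_many_levels :: "'a set \<Rightarrow> ('a \<Rightarrow> 'a \<Rightarrow> bool) \<Rightarrow> bool" where
  "finitely_many_levels X le \<longleftrightarrow> (\<exists>n. Idl_level X le n = {})"

definition wsts :: "'a set \<Rightarrow> 'l set \<Rightarrow> ('l \<Rightarrow> 'a \<Rightarrow> 'a \<Rightarrow> bool) \<Rightarrow> ('a \<Rightarrow> 'a \<Rightarrow> bool) \<Rightarrow> bool" where
  "wsts X Sig T le \<longleftrightarrow> ts X Sig T le \<and> wqo_on X le \<and>
     (\<forall>a\<in>Sig. \<forall>x y x'. T a x y \<longrightarrow> x' \<in> X \<longrightarrow> le x x' \<longrightarrow>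
        (\<exists>w\<in>lists Sig. \<exists>y'. steps T w x' y' \<and> le y y'))"

definition strong_mono :: "'a set \<Rightarrow> 'l set \<Rightarrow> ('l \<Rightarrow> 'a \<Rightarrow> 'a \<Rightarrow> bool) \<Rightarrow> ('a \<Rightarrow> 'a \<Rightarrow> bool) \<Rightarrow> bool" where
  "strong_mono X Sig T le \<longleftrightarrow>
     (\<forall>a\<in>Sig. \<forall>x y x'. T a x y \<longrightarrow> x' \<in> X \<longrightarrow> le x x' \<longrightarrow> (\<exists>y'. T a x' y' \<and> le y y'))"

definition strong_strict_mono :: "'a set \<Rightarrow> 'l set \<Rightarrow> ('l \<Rightarrow> 'a \<Rightarrow> 'a \<Rightarrow> bool) \<Rightarrow> ('a \<Rightarrow> 'a \<Rightarrow> bool) \<Rightarrow> bool" where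
  "strong_strict_mono X Sig T le \<longleftrightarrow> strong_mono X Sig T le \<and>
     (\<forall>a\<in>Sig. \<forall>x y x'. T a x y \<longrightarrow> x' \<in> X \<longrightarrow> lt_of le x x' \<longrightarrow>
        (\<exists>y'. T a x' y' \<and> lt_of le y y'))"

definition deterministic :: "'l set \<Rightarrow> ('l \<Rightarrow> 'a \<Rightarrow> 'a \<Rightarrow> bool) \<Rightarrow> bool" where
  "deterministic Sig T \<longleftrightarrow> (\<forall>a\<in>Sig. \<forall>x y y'. T a x y \<longrightarrow> T a x y' \<longrightarrow> y = y')"

definition very_wsts :: "'a set \<Rightarrow> 'l set \<Rightarrow> ('l \<Rightarrow> 'a \<Rightarrow> 'a \<Rightarrow> bool) \<Rightarrow> ('a \<Rightarrow> 'a \<Rightarrow> bool) \<Rightarrow> bool" where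
  "very_wsts X Sig T le \<longleftrightarrow> wsts X Sig T le \<and> strong_mono X Sig T le \<and>
     wsts (Idl X le) Sig (compl_trans X le T) (\<subseteq>) \<and>
     deterministic Sig (compl_trans X le T) \<and>
     strong_strict_mono (Idl X le) Sig (compl_trans X le T) (\<subseteq>) \<and>
     finitely_many_levels X le"

definition positive_for :: "('l \<Rightarrow> 'a \<Rightarrow> 'a \<Rightarrow> bool) \<Rightarrow> ('a \<Rightarrow> 'a \<Rightarrow> bool) \<Rightarrow> 'l list \<Rightarrow> 'a \<Rightarrow> bool" where
  "positive_for T le w x \<longleftrightarrow> (\<exists>z. steps T w x z \<and> le x z)"

definition positive_word :: "'a set \<Rightarrow> ('l \<Rightarrow> 'a \<Rightarrow> 'a \<Rightarrow> bool) \<Rightarrow> ('a \<Rightarrow> 'a \<Rightarrow> bool) \<Rightarrow> 'l list \<Rightarrow> bool" where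
  "positive_word X T le w \<longleftrightarrow> (\<forall>x\<in>X. Post T x w \<noteq> {} \<longrightarrow> positive_for T le w x)"

definition positive_sys :: "'a set \<Rightarrow> 'l set \<Rightarrow> ('l \<Rightarrow> 'a \<Rightarrow> 'a \<Rightarrow> bool) \<Rightarrow> ('a \<Rightarrow> 'a \<Rightarrow> bool) \<Rightarrow> bool" where
  "positive_sys X Sig T le \<longleftrightarrow>
     (\<forall>w\<in>lists Sig. (\<exists>x\<in>X. positive_for T le w x) \<longrightarrow> positive_word X T le w)"

text \<open>The system S_bot; the new state bot is None, old states x are Some x.\<close>
definition X_bot :: "'a set \<Rightarrow> 'a option set" where
  "X_bot X = insert None (Some ` X)"

fun T_bot :: "('l \<Rightarrow> 'a \<Rightarrow> 'a \<Rightarrow> bool) \<Rightarrow> 'l \<Rightarrow> 'a option \<Rightarrow> 'a option \<Rightarrow> bool" where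
  "T_bot T a (Some x) (Some y) = T a x y"
| "T_bot T a _ _ = False"

fun le_bot :: "('a \<Rightarrow> 'a \<Rightarrow> bool) \<Rightarrow> 'a option \<Rightarrow> 'a option \<Rightarrow> bool" where
  "le_bot le None _ = True"
| "le_bot le (Some x) None = False"
| "le_bot le (Some x) (Some y) = le x y"

end

theory Submission
  imports Defs
begin


definition eI :: "'a set \<Rightarrow> 'a option set" where
  "eI I = insert None (Some ` I)"

lemma eI_sub[simp]: "eI I \<subseteq> eI J \<longleftrightarrow> I \<subseteq> J"
  unfolding eI_def by auto

lemma eI_inj[simp]: "eI I = eI J \<longleftrightarrow> I = J"
  unfolding eI_def by auto

lemma eI_ne_None: "I \<noteq> {} \<Longrightarrow> eI I \<noteq> {None}"
  unfolding eI_def by auto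

lemma None_eI[simp]: "None \<in> eI I" unfolding eI_def by auto

lemma Some_eI[simp]: "Some x \<in> eI I \<longleftrightarrow> x \<in> I" unfolding eI_def by auto

lemma T_bot_iff: "T_bot T a x y \<longleftrightarrow> (\<exists>x0 y0. x = Some x0 \<and> y = Some y0 \<and> T a x0 y0)"
  by (cases x; cases y) auto

lemma le_bot_iff: "le_bot le x y \<longleftrightarrow> x = None \<or> (\<exists>x0 y0. x = Some x0 \<and> y = Some y0 \<and> le x0 y0)"
  by (cases x; cases y) auto

lemma steps_bot: "steps (T_bot T) w x y \<longleftrightarrow>
   (w = [] \<and> x = y) \<or> (\<exists>x0 y0. x = Some x0 \<and> y = Some y0 \<and> steps T w x0 y0)"
proof (induction w arbitrary: x)
  case Nil then show ?case by (cases x) auto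
next
  case (Cons a w)
  show ?case
  proof
    assume "steps (T_bot T) (a # w) x y"
    then obtain z where z: "T_bot T a x z" "steps (T_bot T) w z y" by auto
    then obtain x0 z0 where "x = Some x0" "z = Some z0" "T a x0 z0"
      by (cases x; cases z) auto
    with z Cons.IH[of z] show "(a # w = [] \<and> x = y) \<or> (\<exists>x0 y0. x = Some x0 \<and> y = Some y0 \<and> steps T (a # w) x0 y0)"
      by auto
  next
    assume "(a # w = [] \<and> x = y) \<or> (\<exists>x0 y0. x = Some x0 \<and> y = Some y0 \<and> steps T (a # w) x0 y0)"
    then obtain x0 y0 z0 where "x = Some x0" "y = Some y0" "T a x0 z0" "steps T w z0 y0" by auto
    with Cons.IH[of "Some z0"] show "steps (T_bot T) (a # w) x y" by (auto intro!: exI[of _ "Some z0"])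
  qed
qed

lemma steps_lift:
  assumes "\<And>a x y. R a x y \<Longrightarrow> R' a (f x) (f y)"
  shows "steps R w x y \<Longrightarrow> steps R' w (f x) (f y)"
  by (induction w arbitrary: x) (auto intro: assms)

lemma ideal_bot_iff:
  "is_ideal (X_bot X) (le_bot le) K \<longleftrightarrow> K = {None} \<or> (\<exists>I. is_ideal X le I \<and> K = eI I)"
proof
  assume K: "is_ideal (X_bot X) (le_bot le) K"
  show "K = {None} \<or> (\<exists>I. is_ideal X le I \<and> K = eI I)"
  proof (cases "K = {None}")
    case False
    from K obtain y where "y \<in> K" unfolding is_ideal_def by auto
    then have NK: "None \<in> K" using K unfolding is_ideal_def X_bot_def by auto
    have KX: "K \<subseteq> X_bot X" using K unfolding is_ideal_def by auto
    define I where "I = Some -` K"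
    have KI: "K = eI I" unfolding I_def eI_def using NK
      apply (intro set_eqI) subgoal for x by (cases x) auto done
    have "is_ideal X le I"
      unfolding is_ideal_def
    proof (intro conjI ballI impI)
      show "I \<noteq> {}" using False KI NK unfolding eI_def by auto
      show "I \<subseteq> X" using KX unfolding I_def X_bot_def by auto
    next
      fix x y assume "x \<in> X" "y \<in> I" "le x y"
      then show "x \<in> I" using K unfolding I_def is_ideal_def X_bot_def
        by (metis insertCI le_bot.simps(3) image_eqI vimageE vimageI)
    next
      fix x y assume "x \<in> I" "y \<in> I"
      then obtain z where "z \<in> K" "le_bot le (Some x) z" "le_bot le (Some y) z"
        using K unfolding I_def is_ideal_def by (metis vimageE)
      then show "\<exists>z\<in>I. le x z \<and> le y z" unfolding I_def
        by (cases z) auto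
    qed
    then show ?thesis using KI by auto
  qed simp
next
  assume "K = {None} \<or> (\<exists>I. is_ideal X le I \<and> K = eI I)"
  then show "is_ideal (X_bot X) (le_bot le) K"
  proof
    assume "K = {None}" then show ?thesis
      unfolding is_ideal_def X_bot_def by (auto elim: le_bot.elims)
  next
    assume "\<exists>I. is_ideal X le I \<and> K = eI I"
    then obtain I where I: "is_ideal X le I" and KI: "K = eI I" by auto
    show ?thesis unfolding is_ideal_def
    proof (intro conjI ballI impI)
      show "K \<noteq> {}" using KI unfolding eI_def by auto
      show "K \<subseteq> X_bot X" using I KI unfolding is_ideal_def eI_def X_bot_def by auto
    next
      fix x y assume "x \<in> X_bot X" "y \<in> K" "le_bot le x y"
      then show "x \<in> K" using I KI unfolding is_ideal_def X_bot_def
        by (cases x; cases y) auto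
    next
      fix x y assume xy: "x \<in> K" "y \<in> K"
      show "\<exists>z\<in>K. le_bot le x z \<and> le_bot le y z"
      proof -
      have dir: "\<And>u v. u\<in>I \<Longrightarrow> v\<in>I \<Longrightarrow> \<exists>z\<in>I. le u z \<and> le v z"
        using I unfolding is_ideal_def by blast
      have xI: "x = None \<or> (\<exists>x0. x = Some x0 \<and> x0 \<in> I)" using xy KI unfolding eI_def by auto
      have yI: "y = None \<or> (\<exists>y0. y = Some y0 \<and> y0 \<in> I)" using xy KI unfolding eI_def by auto
      obtain u v where uv: "u \<in> I" "v \<in> I" "x = None \<or> x = Some u" "y = None \<or> y = Some v"
        using xI yI I unfolding is_ideal_def by blast
      from dir[OF uv(1,2)] obtain z where "z \<in> I" "le u z" "le v z" by blast
      then show ?thesis using uv KI by (intro bexI[of _ "Some z"]) (auto simp: le_bot_iff)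
      qed
    qed
  qed
qed

lemma Idl_bot: "Idl (X_bot X) (le_bot le) = insert {None} (eI ` Idl X le)"
  unfolding Idl_def using ideal_bot_iff by blast

lemma Post_bot_Some: "Post (T_bot T) (Some x0) [a] = Some ` Post T x0 [a]"
  unfolding Post_def apply (intro set_eqI) subgoal for y by (cases y) auto done

lemma Post_bot_None: "Post (T_bot T) None [a] = {}"
  unfolding Post_def by auto

lemma PostS_bot_eI: "PostS (T_bot T) (eI I) [a] = Some ` PostS T I [a]"
  unfolding PostS_def eI_def by (simp add: Post_bot_Some Post_bot_None image_UN)

lemma PostS_bot_None: "PostS (T_bot T) {None} [a] = {}"
  unfolding PostS_def Post_def by auto

lemma down_bot: "down (X_bot X) (le_bot le) (Some ` D) = (if D = {} then {} else eI (down X le D))"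
  unfolding down_def X_bot_def eI_def by (auto simp: le_bot_iff)

lemma down_bot_empty: "down X le {} = {}" unfolding down_def by auto

lemma principal_ideal:
  assumes qo: "qo_on X le" and y: "y \<in> X"
  shows "is_ideal X le (down X le {y})"
  using assms unfolding is_ideal_def down_def qo_on_def by blast

lemma down_mono_sing: "y \<in> D \<Longrightarrow> down X le {y} \<subseteq> down X le D"
  unfolding down_def by auto

lemma eI_sub_None: "eI J \<subseteq> {None} \<longleftrightarrow> J = {}"
  unfolding eI_def by auto

lemma ideal_ne: "is_ideal X le I \<Longrightarrow> I \<noteq> {}" unfolding is_ideal_def by auto

lemma compl_bot:
  assumes qo: "qo_on X le" and tr: "\<forall>a x y. T a x y \<longrightarrow> x \<in> X \<and> y \<in> X"
  shows "compl_trans (X_bot X) (le_bot le) (T_bot T) a K K' \<longleftrightarrow>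
    (\<exists>I J. K = eI I \<and> K' = eI J \<and> compl_trans X le T a I J)"
proof
  assume c: "compl_trans (X_bot X) (le_bot le) (T_bot T) a K K'"
  then have KK: "K \<in> Idl (X_bot X) (le_bot le)" "K' \<in> Idl (X_bot X) (le_bot le)"
    and sub: "K' \<subseteq> down (X_bot X) (le_bot le) (PostS (T_bot T) K [a])"
    and mx: "\<And>J'. J'\<in>Idl (X_bot X) (le_bot le) \<Longrightarrow> K' \<subseteq> J' \<Longrightarrow> J' \<subseteq> down (X_bot X) (le_bot le) (PostS (T_bot T) K [a]) \<Longrightarrow> J' = K'"
    unfolding compl_trans_def by auto
  have K'ne: "K' \<noteq> {}" using KK(2) unfolding Idl_def is_ideal_def by auto
  have "K \<noteq> {None}"
  proof
    assume KN: "K = {None}"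
    have "PostS (T_bot T) K [a] = {}" unfolding KN by (rule PostS_bot_None)
    then have "down (X_bot X) (le_bot le) (PostS (T_bot T) K [a]) = {}"
      unfolding down_def by simp
    then show False using sub K'ne by auto
  qed
  then obtain I where I: "I \<in> Idl X le" and KI: "K = eI I" using KK(1) Idl_bot by blast
  define D where "D = PostS T I [a]"
  have dd: "down (X_bot X) (le_bot le) (PostS (T_bot T) K [a]) = (if D = {} then {} else eI (down X le D))"
    unfolding KI D_def PostS_bot_eI down_bot ..
  have Dne: "D \<noteq> {}" using dd sub K'ne by (auto split: if_splits)
  then have dd2: "down (X_bot X) (le_bot le) (PostS (T_bot T) K [a]) = eI (down X le D)" using dd by simp
  have "K' \<noteq> {None}"
  proof
    assume K'N: "K' = {None}"
    from Dne obtain y where yD: "y \<in> D" by auto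
    then have yX: "y \<in> X" using tr unfolding D_def PostS_def Post_def by auto
    let ?P = "down X le {y}"
    have P: "is_ideal X le ?P" using principal_ideal[OF qo yX] .
    have "eI ?P \<in> Idl (X_bot X) (le_bot le)" using P Idl_bot unfolding Idl_def by blast
    moreover have "K' \<subseteq> eI ?P" using K'N by auto
    moreover have "eI ?P \<subseteq> down (X_bot X) (le_bot le) (PostS (T_bot T) K [a])"
      unfolding dd2 using down_mono_sing[OF yD] by simp
    ultimately have "eI ?P = K'" by (rule mx)
    then show False using K'N eI_ne_None[OF ideal_ne[OF P]] by simp
  qed
  then obtain J where J: "J \<in> Idl X le" and KJ: "K' = eI J" using KK(2) Idl_bot by blast
  have "compl_trans X le T a I J"
    unfolding compl_trans_def
  proof (intro conjI ballI impI I J)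
    show "J \<subseteq> down X le (PostS T I [a])" using sub unfolding dd2 KJ D_def by simp
  next
    fix J' assume J': "J' \<in> Idl X le" "J \<subseteq> J' \<and> J' \<subseteq> down X le (PostS T I [a])"
    have "eI J' \<in> Idl (X_bot X) (le_bot le)" using J' Idl_bot by blast
    then have "eI J' = K'" by (rule mx) (use J' in \<open>auto simp: KJ dd2 D_def\<close>)
    then show "J' = J" using KJ by simp
  qed
  then show "\<exists>I J. K = eI I \<and> K' = eI J \<and> compl_trans X le T a I J" using KI KJ by blast
next
  assume "\<exists>I J. K = eI I \<and> K' = eI J \<and> compl_trans X le T a I J"
  then obtain I J where KI: "K = eI I" and KJ: "K' = eI J" and c: "compl_trans X le T a I J" by blast
  from c have IJ: "I \<in> Idl X le" "J \<in> Idl X le"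
    and sub: "J \<subseteq> down X le (PostS T I [a])"
    and mx: "\<And>J'. J'\<in>Idl X le \<Longrightarrow> J \<subseteq> J' \<Longrightarrow> J' \<subseteq> down X le (PostS T I [a]) \<Longrightarrow> J' = J"
    unfolding compl_trans_def by auto
  define D where "D = PostS T I [a]"
  have Jne: "J \<noteq> {}" using IJ(2) unfolding Idl_def is_ideal_def by auto
  have Dne: "D \<noteq> {}" using sub Jne unfolding D_def down_def by auto
  have dd2: "down (X_bot X) (le_bot le) (PostS (T_bot T) K [a]) = eI (down X le D)"
    unfolding KI D_def PostS_bot_eI down_bot using Dne D_def by simp
  show "compl_trans (X_bot X) (le_bot le) (T_bot T) a K K'"
    unfolding compl_trans_def
  proof (intro conjI ballI impI)
    show "K \<in> Idl (X_bot X) (le_bot le)" "K' \<in> Idl (X_bot X) (le_bot le)"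
      unfolding Idl_bot KI KJ using IJ by auto
    show "K' \<subseteq> down (X_bot X) (le_bot le) (PostS (T_bot T) K [a])"
      unfolding dd2 KJ using sub D_def by simp
  next
    fix J' assume J': "J' \<in> Idl (X_bot X) (le_bot le)"
      "K' \<subseteq> J' \<and> J' \<subseteq> down (X_bot X) (le_bot le) (PostS (T_bot T) K [a])"
    have "J' \<noteq> {None}"
    proof
      assume "J' = {None}"
      then have "eI J \<subseteq> {None}" using J'(2) KJ by simp
      then show False using Jne by (simp add: eI_sub_None)
    qed
    then obtain J0 where J0: "J0 \<in> Idl X le" "J' = eI J0" using J'(1) unfolding Idl_bot by auto
    have "J0 = J" using J'(2) unfolding J0 KJ dd2 D_def by (intro mx J0) auto
    then show "J' = K'" using J0 KJ by simp
  qed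
qed



lemma UN_eI: "\<Union>(range (\<lambda>i. eI (g i))) = eI (\<Union>(range g))"
  unfolding eI_def by auto

lemma level_step:
  assumes L1: "eI ` L \<subseteq> L'" and L2: "L' \<subseteq> insert {None} (eI ` L)"
  shows "{\<Union>(range f) | f. (\<forall>i. f i \<in> L') \<and> (\<forall>i. f i \<subset> f (Suc i))}
       = eI ` {\<Union>(range f) | f. (\<forall>i. f i \<in> L) \<and> (\<forall>i. f i \<subset> f (Suc i))}"
proof (intro equalityI subsetI)
  fix U assume "U \<in> {\<Union>(range f) | f. (\<forall>i. f i \<in> L') \<and> (\<forall>i. f i \<subset> f (Suc i))}"
  then obtain f where U: "U = \<Union>(range f)" and fL: "\<forall>i. f i \<in> L'" and fs: "\<forall>i. f i \<subset> f (Suc i)"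
    by blast
  have Nf: "None \<in> f i" for i
  proof -
    have "f i \<in> insert {None} (eI ` L)" by (rule subsetD[OF L2 fL[rule_format]])
    then show ?thesis
    proof (rule insertE)
      assume "f i = {None}" then show ?thesis by simp
    next
      assume "f i \<in> eI ` L"
      then obtain J where "f i = eI J" by (rule imageE)
      then show ?thesis by simp
    qed
  qed
  have "\<exists>g. g \<in> L \<and> f (Suc i) = eI g" for i
  proof -
    have "f (Suc i) \<noteq> {None}"
    proof
      assume "f (Suc i) = {None}"
      moreover have "f i \<subset> f (Suc i)" using fs by blast
      ultimately have "f i \<subset> {None}" by simp
      then have "f i \<subseteq> {None}" "f i \<noteq> {None}" by auto
      moreover have "{None} \<subseteq> f i" using Nf[of i] by simp
      ultimately show False by (metis subset_antisym)
    qed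
    moreover have "f (Suc i) \<in> insert {None} (eI ` L)" by (rule subsetD[OF L2 fL[rule_format]])
    ultimately have "f (Suc i) \<in> eI ` L" by simp
    then show ?thesis by (auto elim!: imageE)
  qed
  then have "\<forall>i. \<exists>g. g \<in> L \<and> f (Suc i) = eI g" by blast
  then have "\<exists>g. \<forall>i. g i \<in> L \<and> f (Suc i) = eI (g i)" by (rule choice)
  then obtain g where g0: "\<forall>i. g i \<in> L \<and> f (Suc i) = eI (g i)" by blast
  have g: "\<And>i. g i \<in> L" "\<And>i. f (Suc i) = eI (g i)" using g0 by auto
  have f01: "f 0 \<subseteq> f (Suc 0)" using fs by blast
  have UU: "\<Union>(range f) = \<Union>(range (\<lambda>i. f (Suc i)))"
  proof (intro equalityI subsetI)
    fix x assume "x \<in> \<Union>(range f)" then obtain i where xi: "x \<in> f i" by blast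
    show "x \<in> \<Union>(range (\<lambda>i. f (Suc i)))"
    proof (cases i)
      case 0 then have "x \<in> f (Suc 0)" using xi f01 by blast
      then show ?thesis by blast
    next
      case (Suc k) then show ?thesis using xi by blast
    qed
  qed blast
  have "\<Union>(range (\<lambda>i. f (Suc i))) = \<Union>(range (\<lambda>i. eI (g i)))" by (simp only: g(2))
  then have U2: "U = eI (\<Union>(range g))" using U UU UN_eI by simp
  have gs: "\<forall>i. g i \<subset> g (Suc i)"
  proof
    fix i
    have "f (Suc i) \<subset> f (Suc (Suc i))" using fs by blast
    then have "eI (g i) \<subset> eI (g (Suc i))" unfolding g(2) .
    then show "g i \<subset> g (Suc i)" by (simp add: psubset_eq)
  qed
  have "\<Union>(range g) \<in> {\<Union>(range f) | f. (\<forall>i. f i \<in> L) \<and> (\<forall>i. f i \<subset> f (Suc i))}"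
    using g(1) gs by blast
  then show "U \<in> eI ` {\<Union>(range f) | f. (\<forall>i. f i \<in> L) \<and> (\<forall>i. f i \<subset> f (Suc i))}"
    unfolding U2 by (rule imageI)
next
  fix U assume "U \<in> eI ` {\<Union>(range f) | f. (\<forall>i. f i \<in> L) \<and> (\<forall>i. f i \<subset> f (Suc i))}"
  then obtain g where U: "U = eI (\<Union>(range g))" and gL: "\<forall>i. g i \<in> L" and gs: "\<forall>i. g i \<subset> g (Suc i)"
    by blast
  have "U = \<Union>(range (\<lambda>i. eI (g i)))" unfolding U by (rule UN_eI[symmetric])
  moreover have "\<forall>i. eI (g i) \<in> L'" using gL L1 by blast
  moreover have "\<forall>i. eI (g i) \<subset> eI (g (Suc i))" using gs by (simp add: psubset_eq)
  ultimately show "U \<in> {\<Union>(range f) | f. (\<forall>i. f i \<in> L') \<and> (\<forall>i. f i \<subset> f (Suc i))}"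
    by blast
qed

lemma levels_bot: "Idl_level (X_bot X) (le_bot le) (Suc n) = eI ` Idl_level X le (Suc n)"
proof (induction n)
  case 0
  show ?case unfolding Idl_level.simps by (rule level_step) (auto simp: Idl_bot)
next
  case (Suc n)
  have "Idl_level (X_bot X) (le_bot le) (Suc (Suc n)) =
     {\<Union>(range f) | f. (\<forall>i. f i \<in> eI ` Idl_level X le (Suc n)) \<and> (\<forall>i. f i \<subset> f (Suc i))}"
    by (simp only: Idl_level.simps(2)[of "X_bot X" _ "Suc n"] Suc)
  also have "\<dots> = eI ` {\<Union>(range f) | f. (\<forall>i. f i \<in> Idl_level X le (Suc n)) \<and> (\<forall>i. f i \<subset> f (Suc i))}"
    by (rule level_step) (rule subset_refl, rule subset_insertI)
  also have "\<dots> = eI ` Idl_level X le (Suc (Suc n))"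
    by (simp only: Idl_level.simps(2)[of X _ "Suc n"])
  finally show ?case .
qed



lemma qo_bot: assumes "qo_on X le" shows "qo_on (X_bot X) (le_bot le)"
proof -
  have rf: "\<And>x. x \<in> X \<Longrightarrow> le x x" using assms unfolding qo_on_def by blast
  have tr: "\<And>x y z. x\<in>X \<Longrightarrow> y\<in>X \<Longrightarrow> z\<in>X \<Longrightarrow> le x y \<Longrightarrow> le y z \<Longrightarrow> le x z"
    using assms unfolding qo_on_def by blast
  show ?thesis unfolding qo_on_def
  proof (intro conjI ballI impI)
    fix x assume "x \<in> X_bot X" then show "le_bot le x x" by (cases x) (auto simp: X_bot_def intro: rf)
  next
    fix x y z assume "x \<in> X_bot X" "y \<in> X_bot X" "z \<in> X_bot X" "le_bot le x y" "le_bot le y z"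
    then show "le_bot le x z" by (cases x; cases y; cases z) (auto simp: X_bot_def intro: tr)
  qed
qed

lemma wqo_bot:
  assumes "wqo_on X le" shows "wqo_on (X_bot X) (le_bot le)"
  unfolding wqo_on_def
proof (intro conjI allI impI)
  show "qo_on (X_bot X) (le_bot le)" using assms qo_bot unfolding wqo_on_def by blast
next
  fix f :: "nat \<Rightarrow> 'a option" assume fX: "\<forall>i. f i \<in> X_bot X"
  show "\<exists>i j. i < j \<and> le_bot le (f i) (f j)"
  proof (cases "\<exists>i. f i = None")
    case True
    then obtain i where "f i = None" by blast
    then show ?thesis by (intro exI[of _ i] exI[of _ "Suc i"]) simp
  next
    case False
    define g where "g i = the (f i)" for i
    have fg: "f i = Some (g i)" for i using False unfolding g_def by (metis option.collapse)
    have "g i \<in> X" for i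
    proof -
      have "f i \<in> X_bot X" using fX by blast
      then have "Some (g i) \<in> insert None (Some ` X)" unfolding fg X_bot_def .
      then show ?thesis by auto
    qed
    then have gX: "\<forall>i. g i \<in> X" by blast
    have W: "\<forall>f::nat \<Rightarrow> _. (\<forall>i. f i \<in> X) \<longrightarrow> (\<exists>i j. i < j \<and> le (f i) (f j))"
      using assms unfolding wqo_on_def by (rule conjunct2)
    from mp[OF spec[OF W, of g] gX] obtain i j where "i < j" "le (g i) (g j)" by blast
    then show ?thesis using fg by (intro exI[of _ i] exI[of _ j]) simp
  qed
qed

lemma wqo_Idl_bot:
  assumes "wqo_on (Idl X le) (\<subseteq>)" shows "wqo_on (Idl (X_bot X) (le_bot le)) (\<subseteq>)"
  unfolding wqo_on_def
proof (intro conjI allI impI)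
  show "qo_on (Idl (X_bot X) (le_bot le)) (\<subseteq>)" unfolding qo_on_def by blast
next
  fix F :: "nat \<Rightarrow> 'a option set" assume FI: "\<forall>i. F i \<in> Idl (X_bot X) (le_bot le)"
  have NF: "None \<in> F i" for i
  proof -
    have "F i \<in> insert {None} (eI ` Idl X le)" using FI[rule_format, of i] unfolding Idl_bot .
    then show ?thesis
    proof (rule insertE)
      assume "F i = {None}" then show ?thesis by simp
    next
      assume "F i \<in> eI ` Idl X le"
      then obtain J where "F i = eI J" by (rule imageE)
      then show ?thesis by simp
    qed
  qed
  show "\<exists>i j. i < j \<and> F i \<subseteq> F j"
  proof (cases "\<exists>i. F i = {None}")
    case True
    then obtain i where "F i = {None}" by (elim exE)
    then show ?thesis using NF[of "Suc i"] by (intro exI[of _ i] exI[of _ "Suc i"]) simp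
  next
    case False
    have "\<exists>J. J \<in> Idl X le \<and> F i = eI J" for i
    proof -
      have "F i \<in> insert {None} (eI ` Idl X le)" using FI[rule_format, of i] unfolding Idl_bot .
      moreover have "F i \<noteq> {None}" using False by simp
      ultimately have "F i \<in> eI ` Idl X le" by simp
      then obtain J where "J \<in> Idl X le" "F i = eI J" by (rule imageE) simp
      then show ?thesis by blast
    qed
    then have "\<forall>i. \<exists>J. J \<in> Idl X le \<and> F i = eI J" by blast
    then have "\<exists>G. \<forall>i. G i \<in> Idl X le \<and> F i = eI (G i)" by (rule choice)
    then obtain G where G0: "\<forall>i. G i \<in> Idl X le \<and> F i = eI (G i)" by blast
    have G: "\<And>i. G i \<in> Idl X le" "\<And>i. F i = eI (G i)" using G0 by auto
    have W: "\<forall>f::nat \<Rightarrow> _. (\<forall>i. f i \<in> Idl X le) \<longrightarrow> (\<exists>i j. i < j \<and> f i \<subseteq> f j)"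
      using assms unfolding wqo_on_def by (rule conjunct2)
    have "\<forall>i. G i \<in> Idl X le" using G(1) by blast
    from mp[OF spec[OF W, of G] this] obtain i j where "i < j" "G i \<subseteq> G j" by blast
    then show ?thesis using G by (intro exI[of _ i] exI[of _ j]) simp
  qed
qed

lemma steps_Some: "steps T w x y \<Longrightarrow> steps (T_bot T) w (Some x) (Some y)"
  by (rule steps_lift[where f = Some]) simp

lemma levels_fin: "finitely_many_levels X le \<Longrightarrow> finitely_many_levels (X_bot X) (le_bot le)"
proof -
  assume "finitely_many_levels X le"
  then obtain n where n: "Idl_level X le n = {}" unfolding finitely_many_levels_def by blast
  have "Idl_level X le (Suc n) = {}" using n by simp
  then have "Idl_level (X_bot X) (le_bot le) (Suc n) = {}" unfolding levels_bot by simp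
  then show ?thesis unfolding finitely_many_levels_def by blast
qed



lemma Idl_bot_above:
  assumes "eI I \<subseteq> K2" "K2 \<in> Idl (X_bot X) (le_bot le)" "I \<noteq> {}"
  shows "\<exists>I2. I2 \<in> Idl X le \<and> K2 = eI I2 \<and> I \<subseteq> I2"
proof -
  have K2: "K2 \<in> insert {None} (eI ` Idl X le)" using assms(2) unfolding Idl_bot .
  have "K2 \<noteq> {None}"
  proof
    assume "K2 = {None}"
    then have "eI I \<subseteq> {None}" using assms(1) by simp
    then show False using assms(3) by (simp add: eI_sub_None)
  qed
  then have "K2 \<in> eI ` Idl X le" using K2 by simp
  then obtain I2 where I2: "I2 \<in> Idl X le" "K2 = eI I2" by (rule imageE) simp
  then have "I \<subseteq> I2" using assms(1) by simp
  then show ?thesis using I2 by blast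
qed

lemma Idl_ne: "I \<in> Idl X le \<Longrightarrow> I \<noteq> {}" unfolding Idl_def is_ideal_def by simp

theorem proposition27:
  fixes X :: "'a set" and Sig :: "'l set"
    and T :: "'l \<Rightarrow> 'a \<Rightarrow> 'a \<Rightarrow> bool" and le :: "'a \<Rightarrow> 'a \<Rightarrow> bool"
  assumes "very_wsts X Sig T le"
  shows "very_wsts (X_bot X) Sig (T_bot T) (le_bot le)
    \<and> (positive_sys X Sig T le \<longrightarrow> positive_sys (X_bot X) Sig (T_bot T) (le_bot le))"
proof -
  from assms have wX: "wsts X Sig T le" and smX: "strong_mono X Sig T le"
    and wI: "wsts (Idl X le) Sig (compl_trans X le T) (\<subseteq>)"
    and detI: "deterministic Sig (compl_trans X le T)"
    and ssmI: "strong_strict_mono (Idl X le) Sig (compl_trans X le T) (\<subseteq>)"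
    and flX: "finitely_many_levels X le"
    unfolding very_wsts_def by blast+
  from wX have finSig: "finite Sig" and qo: "qo_on X le"
    and tr: "\<forall>a x y. T a x y \<longrightarrow> x \<in> X \<and> y \<in> X" and wqoX: "wqo_on X le"
    and monoX: "\<forall>a\<in>Sig. \<forall>x y x'. T a x y \<longrightarrow> x' \<in> X \<longrightarrow> le x x' \<longrightarrow>
        (\<exists>w\<in>lists Sig. \<exists>y'. steps T w x' y' \<and> le y y')"
    unfolding wsts_def ts_def by blast+
  from wI have wqoI: "wqo_on (Idl X le) (\<subseteq>)"
    and monoI: "\<forall>a\<in>Sig. \<forall>x y x'. compl_trans X le T a x y \<longrightarrow> x' \<in> Idl X le \<longrightarrow> x \<subseteq> x' \<longrightarrow>
        (\<exists>w\<in>lists Sig. \<exists>y'. steps (compl_trans X le T) w x' y' \<and> y \<subseteq> y')"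
    unfolding wsts_def by blast+
  have CB: "\<And>a K K'. compl_trans (X_bot X) (le_bot le) (T_bot T) a K K' \<longleftrightarrow>
    (\<exists>I J. K = eI I \<and> K' = eI J \<and> compl_trans X le T a I J)"
    by (rule compl_bot[OF qo tr])
  have CBI: "\<And>a I J. compl_trans X le T a I J \<Longrightarrow> compl_trans (X_bot X) (le_bot le) (T_bot T) a (eI I) (eI J)"
    using CB by blast
  have CIdl: "\<And>a I J. compl_trans X le T a I J \<Longrightarrow> I \<in> Idl X le \<and> J \<in> Idl X le"
    unfolding compl_trans_def by blast
  let ?Xb = "X_bot X" and ?Tb = "T_bot T" and ?lb = "le_bot le"
  let ?C = "compl_trans ?Xb ?lb ?Tb"

  have P1: "wsts ?Xb Sig ?Tb ?lb"
    unfolding wsts_def ts_def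
  proof (intro conjI allI impI ballI)
    show "finite Sig" by (rule finSig)
    show "qo_on ?Xb ?lb" by (rule qo_bot[OF qo])
    show "wqo_on ?Xb ?lb" by (rule wqo_bot[OF wqoX])
  next
    fix a x y assume "?Tb a x y"
    then obtain x0 y0 where "x = Some x0" "y = Some y0" "T a x0 y0" unfolding T_bot_iff by blast
    moreover have "x0 \<in> X" "y0 \<in> X" using tr \<open>T a x0 y0\<close> by blast+
    ultimately show "x \<in> ?Xb" "y \<in> ?Xb" unfolding X_bot_def by simp_all
  next
    fix a x y x' assume a: "a \<in> Sig" and t: "?Tb a x y" and x': "x' \<in> ?Xb" and l: "?lb x x'"
    from t obtain x0 y0 where xy: "x = Some x0" "y = Some y0" "T a x0 y0" unfolding T_bot_iff by blast
    from l xy obtain x0' where x0': "x' = Some x0'" "le x0 x0'" by (cases x') auto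
    have "x0' \<in> X" using x' x0'(1) unfolding X_bot_def by auto
    with monoX a xy(3) x0'(2) obtain w y' where "w \<in> lists Sig" "steps T w x0' y'" "le y0 y'"
      by blast
    then show "\<exists>w\<in>lists Sig. \<exists>y'. steps ?Tb w x' y' \<and> ?lb y y'"
      using xy x0' by (intro bexI[of _ w] exI[of _ "Some y'"]) (simp_all add: steps_Some)
  qed

  have P2: "strong_mono ?Xb Sig ?Tb ?lb"
    unfolding strong_mono_def
  proof (intro allI impI ballI)
    fix a x y x' assume a: "a \<in> Sig" and t: "?Tb a x y" and x': "x' \<in> ?Xb" and l: "?lb x x'"
    from t obtain x0 y0 where xy: "x = Some x0" "y = Some y0" "T a x0 y0" unfolding T_bot_iff by blast
    from l xy obtain x0' where x0': "x' = Some x0'" "le x0 x0'" by (cases x') auto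
    have "x0' \<in> X" using x' x0'(1) unfolding X_bot_def by auto
    with smX a xy(3) x0'(2) obtain y' where "T a x0' y'" "le y0 y'"
      unfolding strong_mono_def by blast
    then show "\<exists>y'. ?Tb a x' y' \<and> ?lb y y'"
      using xy x0' by (intro exI[of _ "Some y'"]) simp
  qed

  have P3: "wsts (Idl ?Xb ?lb) Sig ?C (\<subseteq>)"
    unfolding wsts_def ts_def
  proof (intro conjI allI impI ballI)
    show "finite Sig" by (rule finSig)
    show "qo_on (Idl ?Xb ?lb) (\<subseteq>)" unfolding qo_on_def by blast
    show "wqo_on (Idl ?Xb ?lb) (\<subseteq>)" by (rule wqo_Idl_bot[OF wqoI])
  next
    fix a x y assume "?C a x y"
    then show "x \<in> Idl ?Xb ?lb" "y \<in> Idl ?Xb ?lb" unfolding compl_trans_def by blast+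
  next
    fix a K K' K2 assume a: "a \<in> Sig" and t: "?C a K K'" and K2: "K2 \<in> Idl ?Xb ?lb" and l: "K \<subseteq> K2"
    from t obtain I J where IJ: "K = eI I" "K' = eI J" "compl_trans X le T a I J" unfolding CB by blast
    have "I \<noteq> {}" using CIdl[OF IJ(3)] Idl_ne by blast
    then obtain I2 where I2: "I2 \<in> Idl X le" "K2 = eI I2" "I \<subseteq> I2"
      using Idl_bot_above[of I K2] l IJ(1) K2 by blast
    from monoI a IJ(3) I2(1) I2(3) obtain w J2 where
      w: "w \<in> lists Sig" "steps (compl_trans X le T) w I2 J2" "J \<subseteq> J2" by blast
    have "steps ?C w (eI I2) (eI J2)" by (rule steps_lift[where f = eI and R = "compl_trans X le T" and R' = "?C", OF CBI w(2)])
    then show "\<exists>w\<in>lists Sig. \<exists>y'. steps ?C w K2 y' \<and> K' \<subseteq> y'"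
      using w I2 IJ by (intro bexI[of _ w] exI[of _ "eI J2"]) simp_all
  qed

  have P4: "deterministic Sig ?C"
    unfolding deterministic_def
  proof (intro allI impI ballI)
    fix a K K1 K2 assume a: "a \<in> Sig" and t1: "?C a K K1" and t2: "?C a K K2"
    from t1 obtain I1 J1 where 1: "K = eI I1" "K1 = eI J1" "compl_trans X le T a I1 J1" unfolding CB by blast
    from t2 obtain I2 J2 where 2: "K = eI I2" "K2 = eI J2" "compl_trans X le T a I2 J2" unfolding CB by blast
    have "I1 = I2" using 1(1) 2(1) by simp
    then have "J1 = J2" using detI a 1(3) 2(3) unfolding deterministic_def by blast
    then show "K1 = K2" using 1 2 by simp
  qed

  have P5: "strong_strict_mono (Idl ?Xb ?lb) Sig ?C (\<subseteq>)"
    unfolding strong_strict_mono_def strong_mono_def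
  proof (intro conjI allI impI ballI)
    fix a K K' K2 assume a: "a \<in> Sig" and t: "?C a K K'" and K2: "K2 \<in> Idl ?Xb ?lb" and l: "K \<subseteq> K2"
    from t obtain I J where IJ: "K = eI I" "K' = eI J" "compl_trans X le T a I J" unfolding CB by blast
    have "I \<noteq> {}" using CIdl[OF IJ(3)] Idl_ne by blast
    then obtain I2 where I2: "I2 \<in> Idl X le" "K2 = eI I2" "I \<subseteq> I2"
      using Idl_bot_above[of I K2] l IJ(1) K2 by blast
    from ssmI a IJ(3) I2(1) I2(3) obtain J2 where "compl_trans X le T a I2 J2" "J \<subseteq> J2"
      unfolding strong_strict_mono_def strong_mono_def by blast
    then show "\<exists>y'. ?C a K2 y' \<and> K' \<subseteq> y'"
      using I2 IJ CBI by (intro exI[of _ "eI J2"]) simp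
  next
    fix a K K' K2 assume a: "a \<in> Sig" and t: "?C a K K'" and K2: "K2 \<in> Idl ?Xb ?lb" and l: "lt_of (\<subseteq>) K K2"
    from t obtain I J where IJ: "K = eI I" "K' = eI J" "compl_trans X le T a I J" unfolding CB by blast
    have "I \<noteq> {}" using CIdl[OF IJ(3)] Idl_ne by blast
    moreover have lK: "K \<subseteq> K2" "\<not> K2 \<subseteq> K" using l unfolding lt_of_def by blast+
    ultimately obtain I2 where I2: "I2 \<in> Idl X le" "K2 = eI I2" "I \<subseteq> I2"
      using Idl_bot_above[of I K2] IJ(1) K2 by blast
    have "lt_of (\<subseteq>) I I2" using lK I2(2) IJ(1) unfolding lt_of_def by simp
    from ssmI a IJ(3) I2(1) this obtain J2 where "compl_trans X le T a I2 J2" "lt_of (\<subseteq>) J J2"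
      unfolding strong_strict_mono_def by blast
    then show "\<exists>y'. ?C a K2 y' \<and> lt_of (\<subseteq>) K' y'"
      using I2 IJ CBI by (intro exI[of _ "eI J2"]) (simp add: lt_of_def)
  qed

  have P6: "finitely_many_levels ?Xb ?lb" by (rule levels_fin[OF flX])

  have P7: "positive_sys X Sig T le \<longrightarrow> positive_sys ?Xb Sig ?Tb ?lb"
  proof
    assume pos: "positive_sys X Sig T le"
    show "positive_sys ?Xb Sig ?Tb ?lb"
      unfolding positive_sys_def
    proof (intro ballI impI)
      fix w assume w: "w \<in> lists Sig" and ex: "\<exists>x\<in>?Xb. positive_for ?Tb ?lb w x"
      show "positive_word ?Xb ?Tb ?lb w"
        unfolding positive_word_def
      proof (intro ballI impI)
        fix x assume x: "x \<in> ?Xb" and pne: "Post ?Tb x w \<noteq> {}"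
        show "positive_for ?Tb ?lb w x"
        proof (cases "w = []")
          case True
          have "?lb x x" using qo_bot[OF qo] x unfolding qo_on_def by blast
          then show ?thesis unfolding positive_for_def True by simp
        next
          case False
          from ex obtain x1 z1 where x1: "x1 \<in> ?Xb" "steps ?Tb w x1 z1" "?lb x1 z1"
            unfolding positive_for_def by blast
          from x1(2) False obtain a0 b0 where ab: "x1 = Some a0" "z1 = Some b0" "steps T w a0 b0"
            unfolding steps_bot by blast
          have a0X: "a0 \<in> X" using x1(1) ab(1) unfolding X_bot_def by auto
          have "positive_for T le w a0" unfolding positive_for_def using ab x1(3) by auto
          then have pw: "positive_word X T le w" using pos w a0X unfolding positive_sys_def by blast
          from pne obtain y where "steps ?Tb w x y" unfolding Post_def by blast
          with False obtain x0 y0 where xy: "x = Some x0" "y = Some y0" "steps T w x0 y0"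
            unfolding steps_bot by blast
          have x0X: "x0 \<in> X" using x xy(1) unfolding X_bot_def by auto
          have "Post T x0 w \<noteq> {}" using xy(3) unfolding Post_def by blast
          then have "positive_for T le w x0" using pw x0X unfolding positive_word_def by blast
          then obtain z0 where "steps T w x0 z0" "le x0 z0" unfolding positive_for_def by blast
          then show ?thesis unfolding positive_for_def using xy(1)
            by (intro exI[of _ "Some z0"]) (simp add: steps_Some)
        qed
      qed
    qed
  qed

  show ?thesis unfolding very_wsts_def using P1 P2 P3 P4 P5 P6 P7 by blast
qed

end
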